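(* For a semigroup $S$ the following are equivalent: (i) $S$ is intra-regular; (ii) $\underline{A}\cap\underline{B}\subseteq\underline{A}\circ\underline{B}$ for every IF left ideal $A=(\mu_A,\nu_A)$ and every IF right ideal $B=(\mu_B,\nu_B)$ of $S$.
   Context: A semigroup $S$ is intra-regular if for every $x\in S$ there are $a,b\in S$ with $x=ax^2b$. An intuitionistic fuzzy (IF) subset of $S$ is a pair $A=(\mu_A,\nu_A)$ of functions $S\to[0,1]$ with $\mu_A(x)+\nu_A(x)\le1$ for all $x$. $A$ is an IF right (resp. left) ideal of $S$ if $\mu_A(xy)\ge\mu_A(x)$ and $\nu_A(xy)\le\nu_A(x)$ (resp. $\mu_A(xy)\ge\mu_A(y)$ and $\nu_A(xy)\le\nu_A(y)$) for all $x,y\in S$. For $x\in S$ and $\alpha,\beta\in[0,1]$ with $\alpha+\beta\le1$, the IF point $x_{(\alpha,\beta)}$ is the IF subset of $S$ with value $(\alpha,\beta)$ at $x$ and $(0,1)$ elsewhere (so all points $x_{(0,1)}$ coincide). $\underline{S}$ is the set of all IF points of $S$; it is a semigroup under $x_{(\alpha,\beta)}\circ y_{(\gamma,\delta)}=(xy)_{(\min(\alpha,\gamma),\max(\beta,\delta))}$. For an IF subset $A$, $\underline{A}=\{x_{(\alpha,\beta)}\in\underline{S}:\mu_A(x)\ge\alpha,\ \nu_A(x)\le\beta\}$. For subsets $X,Y\subseteq\underline{S}$, $X\circ Y=\{p\circ q:p\in X,q\in Y\}$. *)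

theory Defs
  imports Complex_Main
begin

definition intra_regular :: "'a::semigroup_mult itself \<Rightarrow> bool" where
  "intra_regular _ \<longleftrightarrow> (\<forall>x::'a. \<exists>a b. x = a * (x * x) * b)"

definition if_subset :: "('a \<Rightarrow> real) \<Rightarrow> ('a \<Rightarrow> real) \<Rightarrow> bool" where
  "if_subset \<mu> \<nu> \<longleftrightarrow> (\<forall>x. 0 \<le> \<mu> x \<and> \<mu> x \<le> 1 \<and> 0 \<le> \<nu> x \<and> \<nu> x \<le> 1 \<and> \<mu> x + \<nu> x \<le> 1)"

definition if_left_ideal :: "('a::semigroup_mult \<Rightarrow> real) \<Rightarrow> ('a \<Rightarrow> real) \<Rightarrow> bool" where
  "if_left_ideal \<mu> \<nu> \<longleftrightarrow> if_subset \<mu> \<nu> \<and> (\<forall>x y. \<mu> (x * y) \<ge> \<mu> y \<and> \<nu> (x * y) \<le> \<nu> y)"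

definition if_right_ideal :: "('a::semigroup_mult \<Rightarrow> real) \<Rightarrow> ('a \<Rightarrow> real) \<Rightarrow> bool" where
  "if_right_ideal \<mu> \<nu> \<longleftrightarrow> if_subset \<mu> \<nu> \<and> (\<forall>x y. \<mu> (x * y) \<ge> \<mu> x \<and> \<nu> (x * y) \<le> \<nu> x)"

definition if_param :: "real \<Rightarrow> real \<Rightarrow> bool" where
  "if_param \<alpha> \<beta> \<longleftrightarrow> 0 \<le> \<alpha> \<and> \<alpha> \<le> 1 \<and> 0 \<le> \<beta> \<and> \<beta> \<le> 1 \<and> \<alpha> + \<beta> \<le> 1"

text \<open>The IF point x_(alpha,beta), represented as the IF subset it is
  (pair of values at each element); hence all points x_(0,1) coincide.\<close>
definition ifpoint :: "'a \<Rightarrow> real \<Rightarrow> real \<Rightarrow> ('a \<Rightarrow> real \<times> real)" where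
  "ifpoint x \<alpha> \<beta> = (\<lambda>z. if z = x then (\<alpha>, \<beta>) else (0, 1))"

definition ifpoints :: "('a \<Rightarrow> real \<times> real) set" where
  "ifpoints = {ifpoint x \<alpha> \<beta> | x \<alpha> \<beta>. if_param \<alpha> \<beta>}"

definition ifpoint_set :: "('a \<Rightarrow> real) \<Rightarrow> ('a \<Rightarrow> real) \<Rightarrow> ('a \<Rightarrow> real \<times> real) set" where
  "ifpoint_set \<mu> \<nu> = {ifpoint x \<alpha> \<beta> | x \<alpha> \<beta>. if_param \<alpha> \<beta> \<and> \<mu> x \<ge> \<alpha> \<and> \<nu> x \<le> \<beta>}"

definition ifpoint_comp :: "('a::semigroup_mult \<Rightarrow> real \<times> real) set \<Rightarrow> ('a \<Rightarrow> real \<times> real) set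
    \<Rightarrow> ('a \<Rightarrow> real \<times> real) set" where
  "ifpoint_comp X Y = {ifpoint (x * y) (min \<alpha> \<gamma>) (max \<beta> \<delta>) | x \<alpha> \<beta> y \<gamma> \<delta>.
      if_param \<alpha> \<beta> \<and> if_param \<gamma> \<delta> \<and> ifpoint x \<alpha> \<beta> \<in> X \<and> ifpoint y \<gamma> \<delta> \<in> Y}"

end

theory Submission
  imports Defs
begin

lemma pt_mem_one:
  assumes "ifpoint u 1 b \<in> ifpoint_set \<mu> \<nu>"
  shows "\<mu> u \<ge> 1"
proof -
  from assms obtain u' a' b' where e: "ifpoint u 1 b = ifpoint u' a' b'" and h: "\<mu> u' \<ge> a'"
    unfolding ifpoint_set_def by blast
  from fun_cong[OF e, of u] have "(1::real, b) = (if u = u' then (a', b') else (0, 1))"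
    by (simp add: ifpoint_def)
  then have "u = u'" "a' = 1" by (auto split: if_splits)
  with h show ?thesis by simp
qed

lemma fwd:
  fixes \<mu>A \<nu>A \<mu>B \<nu>B :: "'a::semigroup_mult \<Rightarrow> real"
  assumes ir: "\<forall>x::'a::semigroup_mult. \<exists>a b. x = a * (x * x) * b"
    and LA: "if_left_ideal \<mu>A \<nu>A" and RB: "if_right_ideal \<mu>B \<nu>B"
    and p: "p \<in> ifpoint_set \<mu>A \<nu>A \<inter> ifpoint_set \<mu>B \<nu>B"
  shows "p \<in> ifpoint_comp (ifpoint_set \<mu>A \<nu>A) (ifpoint_set \<mu>B \<nu>B)"
proof -
  from p obtain x a b where p1: "p = ifpoint x a b" and pa: "if_param a b"
     and hA: "\<mu>A x \<ge> a" "\<nu>A x \<le> b" unfolding ifpoint_set_def by blast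
  from p obtain x2 a2 b2 where p2: "p = ifpoint x2 a2 b2" and pa2: "if_param a2 b2"
     and hB: "\<mu>B x2 \<ge> a2" "\<nu>B x2 \<le> b2" unfolding ifpoint_set_def by blast
  have subA: "if_subset \<mu>A \<nu>A" and subB: "if_subset \<mu>B \<nu>B"
    using LA RB by (auto simp: if_left_ideal_def if_right_ideal_def)
  show ?thesis
  proof (cases "(a, b) = (0, 1)")
    case True
    obtain z where "z = x" by simp
    have P0: "if_param 0 1" by (simp add: if_param_def)
    have "ifpoint z 0 1 \<in> ifpoint_set \<mu>A \<nu>A" "ifpoint z 0 1 \<in> ifpoint_set \<mu>B \<nu>B"
      using subA subB P0 unfolding ifpoint_set_def if_subset_def by fastforce+
    moreover have "p = ifpoint (z * z) (min 0 0) (max 1 1)"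
      using True p1 by (simp add: ifpoint_def)
    ultimately show ?thesis unfolding ifpoint_comp_def using P0 by blast
  next
    case False
    from fun_cong[OF trans[OF p1[symmetric] p2], of x]
    have "(a, b) = (if x = x2 then (a2, b2) else (0, 1))" by (simp add: ifpoint_def)
    with False have e: "x = x2" "a = a2" "b = b2" by (auto split: if_splits)
    from ir obtain c d where xd: "x = c * (x * x) * d" by blast
    have xd2: "x = (c * x) * (x * d)" using xd by (simp add: mult.assoc)
    have "\<mu>A (c * x) \<ge> a" "\<nu>A (c * x) \<le> b" using LA hA
      unfolding if_left_ideal_def by (meson order_trans)+
    then have A: "ifpoint (c * x) a b \<in> ifpoint_set \<mu>A \<nu>A"
      using pa unfolding ifpoint_set_def by blast
    have "\<mu>B (x * d) \<ge> a" "\<nu>B (x * d) \<le> b" using RB hB e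
      unfolding if_right_ideal_def by (meson order_trans)+
    then have B: "ifpoint (x * d) a b \<in> ifpoint_set \<mu>B \<nu>B"
      using pa unfolding ifpoint_set_def by blast
    have "p = ifpoint ((c * x) * (x * d)) (min a a) (max b b)" using p1 xd2 by simp
    then show ?thesis unfolding ifpoint_comp_def using A B pa by blast
  qed
qed

theorem theorem3p14:
  shows "intra_regular TYPE('a::semigroup_mult) \<longleftrightarrow>
    (\<forall>(\<mu>A::'a \<Rightarrow> real) \<nu>A \<mu>B \<nu>B. if_left_ideal \<mu>A \<nu>A \<longrightarrow> if_right_ideal \<mu>B \<nu>B \<longrightarrow>
       ifpoint_set \<mu>A \<nu>A \<inter> ifpoint_set \<mu>B \<nu>B
         \<subseteq> ifpoint_comp (ifpoint_set \<mu>A \<nu>A) (ifpoint_set \<mu>B \<nu>B))"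
proof
  assume "intra_regular TYPE('a)"
  then show "\<forall>(\<mu>A::'a \<Rightarrow> real) \<nu>A \<mu>B \<nu>B. if_left_ideal \<mu>A \<nu>A \<longrightarrow> if_right_ideal \<mu>B \<nu>B \<longrightarrow>
       ifpoint_set \<mu>A \<nu>A \<inter> ifpoint_set \<mu>B \<nu>B
         \<subseteq> ifpoint_comp (ifpoint_set \<mu>A \<nu>A) (ifpoint_set \<mu>B \<nu>B)"
    unfolding intra_regular_def using fwd by blast
next
  assume H: "\<forall>(\<mu>A::'a \<Rightarrow> real) \<nu>A \<mu>B \<nu>B. if_left_ideal \<mu>A \<nu>A \<longrightarrow> if_right_ideal \<mu>B \<nu>B \<longrightarrow>
       ifpoint_set \<mu>A \<nu>A \<inter> ifpoint_set \<mu>B \<nu>B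
         \<subseteq> ifpoint_comp (ifpoint_set \<mu>A \<nu>A) (ifpoint_set \<mu>B \<nu>B)"
  show "intra_regular TYPE('a)" unfolding intra_regular_def
  proof
    fix x :: 'a
    define L where "L = {x} \<union> range (\<lambda>s. s * x)"
    define R where "R = {x} \<union> range (\<lambda>s. x * s)"
    define \<mu>A where "\<mu>A = (\<lambda>z. if z \<in> L then 1 else (0::real))"
    define \<nu>A where "\<nu>A = (\<lambda>z. if z \<in> L then 0 else (1::real))"
    define \<mu>B where "\<mu>B = (\<lambda>z. if z \<in> R then 1 else (0::real))"
    define \<nu>B where "\<nu>B = (\<lambda>z. if z \<in> R then 0 else (1::real))"
    have Lc: "y * z \<in> L" if "z \<in> L" for y z
      using that unfolding L_def by (auto simp: mult.assoc[symmetric])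
    have Rc: "z * y \<in> R" if "z \<in> R" for y z
      using that unfolding R_def by (auto simp: mult.assoc)
    have LA: "if_left_ideal \<mu>A \<nu>A"
      unfolding if_left_ideal_def if_subset_def \<mu>A_def \<nu>A_def using Lc by auto
    have RB: "if_right_ideal \<mu>B \<nu>B"
      unfolding if_right_ideal_def if_subset_def \<mu>B_def \<nu>B_def using Rc by auto
    have P: "if_param 1 0" by (simp add: if_param_def)
    have "ifpoint x 1 0 \<in> ifpoint_set \<mu>A \<nu>A \<inter> ifpoint_set \<mu>B \<nu>B"
      unfolding ifpoint_set_def using P by (auto simp: \<mu>A_def \<nu>A_def \<mu>B_def \<nu>B_def L_def R_def)
    with H LA RB have "ifpoint x 1 0 \<in> ifpoint_comp (ifpoint_set \<mu>A \<nu>A) (ifpoint_set \<mu>B \<nu>B)"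
      by blast
    then obtain u a b v c d where e: "ifpoint x 1 0 = ifpoint (u * v) (min a c) (max b d)"
      and pa: "if_param a b" "if_param c d"
      and mA: "ifpoint u a b \<in> ifpoint_set \<mu>A \<nu>A" and mB: "ifpoint v c d \<in> ifpoint_set \<mu>B \<nu>B"
      unfolding ifpoint_comp_def by blast
    from fun_cong[OF e, of x]
    have "(1::real, 0::real) = (if x = u * v then (min a c, max b d) else (0, 1))"
      by (simp add: ifpoint_def)
    then have xuv: "x = u * v" and m1: "min a c = 1" by (auto split: if_splits)
    with pa have "a = 1" "c = 1" by (auto simp: if_param_def)
    then have "\<mu>A u \<ge> 1" "\<mu>B v \<ge> 1"
      using pt_mem_one[of u b \<mu>A \<nu>A] pt_mem_one[of v d \<mu>B \<nu>B] mA mB by simp_all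
    then have uL: "u \<in> L" and vR: "v \<in> R"
      by (auto simp: \<mu>A_def \<mu>B_def split: if_splits)
    show "\<exists>a b. x = a * (x * x) * b"
    proof -
      from uL vR consider "u = x" "v = x" | s where "u = x" "v = x * s"
        | s where "u = s * x" "v = x" | s t where "u = s * x" "v = x * t"
        unfolding L_def R_def by blast
      then show ?thesis
      proof cases
        case 1
        have h: "x = x * x" using xuv unfolding 1 .
        have "x * (x * x) * x = (x * x) * (x * x)" by (simp add: mult.assoc)
        also have "\<dots> = x" using h[symmetric] by simp
        finally have "x = x * (x * x) * x" by simp
        then show ?thesis by blast
      next
        case (2 s)
        have h: "x = x * x * s" using xuv unfolding 2 by (simp only: mult.assoc)
        have "x * (x * x * s) * s = x" using h[symmetric] by simp
        then have "x = x * (x * x * s) * s" by simp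
        then have "x = x * (x * x) * (s * s)" by (simp add: mult.assoc)
        then show ?thesis by blast
      next
        case (3 s)
        have h: "x = s * x * x" using xuv unfolding 3 by (simp only: mult.assoc)
        have "s * (s * x * x) * x = x" using h[symmetric] by simp
        then have "x = s * (s * x * x) * x" by simp
        then have "x = (s * s) * (x * x) * x" by (simp add: mult.assoc)
        then show ?thesis by blast
      next
        case (4 s t)
        have "x = s * (x * x) * t" using xuv unfolding 4 by (simp only: mult.assoc)
        then show ?thesis by blast
      qed
    qed
  qed
qed

end
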